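(* Let $n\in\mathbb{N}$, $q\ge 2$, and let $\Gamma$ be a finite constraint language of $k$-ary relations over $[q]$. For $a,b\in[q]^n$, define $(a,b)\in\mathcal{E}$ if every instance of $\mathsf{CSP}(\Gamma)$ on $n$ variables that is satisfied by $a$ is also satisfied by $b$. Then $\mathcal{E}$ is an equivalence relation on $[q]^n$. Moreover, for every $a\in[q]^n$ there exists an instance $P_a$ of $\mathsf{CSP}(\Gamma)$ on $n$ variables with $\mathrm{Sat}(P_a)=[a]_{\mathcal{E}}$, the equivalence class of $a$ under $\mathcal{E}$.
   Context: An instance of $\mathsf{CSP}(\Gamma)$ on variables $x_1,\dots,x_n$ over $[q]=\{0,\dots,q-1\}$ is a finite set of constraints $\{R,(x_{i_1}+\lambda_{i_1},\dots,x_{i_k}+\lambda_{i_k})\}$ with $R\in\Gamma$, $(i_1,\dots,i_k)\in[n]^k$, $\lambda_{i_j}\in[q]$; an assignment $a\in[q]^n$ satisfies it if $(a_{i_1}+\lambda_{i_1},\dots,a_{i_k}+\lambda_{i_k})\in R$ (addition mod $q$), and satisfies the instance if it satisfies all its constraints. $\mathrm{Sat}(I)$ denotes the set of assignments satisfying $I$. *)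

theory Defs
  imports Main
begin

definition cube :: "nat \<Rightarrow> nat \<Rightarrow> nat list set" where
  "cube q m = {xs. length xs = m \<and> (\<forall>x\<in>set xs. x < q)}"

text \<open>A constraint: a relation R, a scope (i_1,...,i_k) of variable indices,
  and a shift vector lam (lam ! i is the shift applied to variable x_i).\<close>

type_synonym constr = "nat list set \<times> nat list \<times> nat list"

definition is_constraint :: "nat list set set \<Rightarrow> nat \<Rightarrow> nat \<Rightarrow> nat \<Rightarrow> constr \<Rightarrow> bool" where
  "is_constraint \<Gamma> q k n c \<longleftrightarrow>
     (case c of (R, sc, lam) \<Rightarrow>
        R \<in> \<Gamma> \<and> length sc = k \<and> (\<forall>i\<in>set sc. i < n) \<and> lam \<in> cube q n)"

definition is_instance :: "nat list set set \<Rightarrow> nat \<Rightarrow> nat \<Rightarrow> nat \<Rightarrow> constr set \<Rightarrow> bool" where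
  "is_instance \<Gamma> q k n I \<longleftrightarrow> finite I \<and> (\<forall>c\<in>I. is_constraint \<Gamma> q k n c)"

definition sat_constr :: "nat \<Rightarrow> nat list \<Rightarrow> constr \<Rightarrow> bool" where
  "sat_constr q a c \<longleftrightarrow>
     (case c of (R, sc, lam) \<Rightarrow> map (\<lambda>i. (a ! i + lam ! i) mod q) sc \<in> R)"

definition Sat :: "nat \<Rightarrow> nat \<Rightarrow> constr set \<Rightarrow> nat list set" where
  "Sat q n I = {a \<in> cube q n. \<forall>c\<in>I. sat_constr q a c}"

definition E_rel :: "nat list set set \<Rightarrow> nat \<Rightarrow> nat \<Rightarrow> nat \<Rightarrow> (nat list \<times> nat list) set" where
  "E_rel \<Gamma> q k n = {(a, b). a \<in> cube q n \<and> b \<in> cube q n \<and>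
      (\<forall>I. is_instance \<Gamma> q k n I \<longrightarrow> a \<in> Sat q n I \<longrightarrow> b \<in> Sat q n I)}"

end

theory Submission
  imports Defs
begin

definition vadd :: "nat \<Rightarrow> nat \<Rightarrow> nat list \<Rightarrow> nat list \<Rightarrow> nat list" where
  "vadd q n a c = map (\<lambda>i. (a ! i + c ! i) mod q) [0..<n]"

definition shc :: "nat \<Rightarrow> nat \<Rightarrow> nat list \<Rightarrow> constr \<Rightarrow> constr" where
  "shc q n c con = (case con of (R, sc, lam) \<Rightarrow> (R, sc, vadd q n lam c))"

lemma vadd_cube: "q > 0 \<Longrightarrow> vadd q n a c \<in> cube q n"
  by (auto simp: vadd_def cube_def)

lemma modlem: "((x::nat) + (l + c) mod q) mod q = ((x + c) mod q + l) mod q"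
  by (metis add.commute add.left_commute mod_add_left_eq mod_add_right_eq)

lemma sat_shc:
  assumes "is_constraint \<Gamma> q k n con"
  shows "sat_constr q a (shc q n c con) \<longleftrightarrow> sat_constr q (vadd q n a c) con"
proof -
  obtain R sc lam where con: "con = (R, sc, lam)" by (cases con) auto
  have sc: "\<forall>i\<in>set sc. i < n" using assms con by (simp add: is_constraint_def)
  have eq: "map (\<lambda>i. (a ! i + vadd q n lam c ! i) mod q) sc
      = map (\<lambda>i. (vadd q n a c ! i + lam ! i) mod q) sc"
    using sc by (auto simp: vadd_def modlem intro!: map_cong)
  show ?thesis by (simp only: con shc_def sat_constr_def prod.case eq)
qed

lemma shc_constraint:
  assumes "is_constraint \<Gamma> q k n con" "q > 0"
  shows "is_constraint \<Gamma> q k n (shc q n c con)"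
  using assms vadd_cube[OF assms(2)]
  by (cases con) (auto simp: is_constraint_def shc_def)

lemma shift_E:
  assumes ab: "(a, b) \<in> E_rel \<Gamma> q k n" and q: "q > 0"
  shows "(vadd q n a c, vadd q n b c) \<in> E_rel \<Gamma> q k n"
proof -
  have "vadd q n b c \<in> Sat q n I"
    if I: "is_instance \<Gamma> q k n I" and aI: "vadd q n a c \<in> Sat q n I" for I
  proof -
    let ?J = "shc q n c ` I"
    have J: "is_instance \<Gamma> q k n ?J"
      using I q shc_constraint by (auto simp: is_instance_def)
    have Icon: "\<And>con. con \<in> I \<Longrightarrow> is_constraint \<Gamma> q k n con"
      using I by (auto simp: is_instance_def)
    have acube: "a \<in> cube q n" and bcube: "b \<in> cube q n" using ab by (auto simp: E_rel_def)
    have "\<forall>con\<in>?J. sat_constr q a con"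
    proof
      fix con' assume "con' \<in> ?J"
      then obtain con where con: "con \<in> I" "con' = shc q n c con" by blast
      have "sat_constr q (vadd q n a c) con" using aI con(1) by (auto simp: Sat_def)
      then show "sat_constr q a con'" using sat_shc[OF Icon[OF con(1)]] con(2) by simp
    qed
    then have "a \<in> Sat q n ?J" using acube by (simp add: Sat_def)
    then have bJ: "b \<in> Sat q n ?J" using ab J by (simp add: E_rel_def)
    have "\<forall>con\<in>I. sat_constr q (vadd q n b c) con"
    proof
      fix con assume con: "con \<in> I"
      have "sat_constr q b (shc q n c con)" using bJ con by (auto simp: Sat_def)
      then show "sat_constr q (vadd q n b c) con" using sat_shc[OF Icon[OF con]] by simp
    qed
    then show ?thesis using vadd_cube[OF q] by (simp add: Sat_def)
  qed
  then show ?thesis using vadd_cube[OF q] by (auto simp: E_rel_def)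
qed

lemma E_trans: "(a, b) \<in> E_rel \<Gamma> q k n \<Longrightarrow> (b, c) \<in> E_rel \<Gamma> q k n \<Longrightarrow> (a, c) \<in> E_rel \<Gamma> q k n"
  by (auto simp: E_rel_def)

lemma E_refl: "a \<in> cube q n \<Longrightarrow> (a, a) \<in> E_rel \<Gamma> q k n"
  by (auto simp: E_rel_def)

lemma cube_eq: "a \<in> cube q n \<Longrightarrow> a = map (\<lambda>i. a ! i mod q) [0..<n]"
  by (auto simp: cube_def intro: nth_equalityI)

lemma E_sym:
  assumes ab: "(a, b) \<in> E_rel \<Gamma> q k n" and q: "q > 0"
  shows "(b, a) \<in> E_rel \<Gamma> q k n"
proof -
  have a: "a \<in> cube q n" and b: "b \<in> cube q n" using ab by (auto simp: E_rel_def)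
  define d where "d = map (\<lambda>i. (b ! i + q - a ! i) mod q) [0..<n]"
  define x where "x j = map (\<lambda>i. (a ! i + j * d ! i) mod q) [0..<n]" for j :: nat
  define c where "c j = map (\<lambda>i. (j * d ! i) mod q) [0..<n]" for j :: nat
  have aq: "i < n \<Longrightarrow> a ! i < q" for i using a by (auto simp: cube_def)
  have bq: "i < n \<Longrightarrow> b ! i < q" for i using b by (auto simp: cube_def)
  have bd: "i < n \<Longrightarrow> b ! i = (a ! i + d ! i) mod q" for i
  proof -
    assume i: "i < n"
    have "(a ! i + d ! i) mod q = (a ! i + (b ! i + q - a ! i)) mod q"
      using i by (simp add: d_def mod_add_right_eq)
    also have "\<dots> = (b ! i + q) mod q" using aq[OF i] by simp
    also have "\<dots> = b ! i" using bq[OF i] by simp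
    finally show ?thesis by simp
  qed
  have x1: "x 1 = b"
    using b bd by (auto simp: x_def cube_def intro!: nth_equalityI)
  have xq: "x q = a"
  proof -
    have "(a ! i + q * d ! i) mod q = a ! i" if "i < n" for i
      using aq[OF that] by simp
    then show ?thesis using a by (auto simp: x_def cube_def intro!: nth_equalityI)
  qed
  have va: "vadd q n a (c j) = x j" for j
    by (auto simp: vadd_def c_def x_def mod_add_right_eq)
  have vb: "vadd q n b (c j) = x (Suc j)" for j
  proof -
    have "(b ! i + j * d ! i mod q) mod q = (a ! i + Suc j * d ! i) mod q" if "i < n" for i
    proof -
      have "(b ! i + j * d ! i mod q) mod q = (b ! i + j * d ! i) mod q"
        by (simp add: mod_add_right_eq)
      also have "\<dots> = ((a ! i + d ! i) mod q + j * d ! i) mod q" using bd[OF that] by simp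
      also have "\<dots> = (a ! i + d ! i + j * d ! i) mod q" by (simp add: mod_add_left_eq)
      finally show ?thesis by (simp add: algebra_simps)
    qed
    then show ?thesis by (auto simp: vadd_def c_def x_def)
  qed
  have step: "(x j, x (Suc j)) \<in> E_rel \<Gamma> q k n" for j
    using shift_E[OF ab q, of "c j"] va vb by simp
  have "(x 1, x (Suc m)) \<in> E_rel \<Gamma> q k n" for m
  proof (induction m)
    case 0
    then show ?case using E_refl b x1 by simp
  next
    case (Suc m)
    then show ?case using step E_trans by blast
  qed
  from this[of "q - 1"] q x1 xq show ?thesis by simp
qed

theorem theorem4p2:
  fixes n q k :: nat and \<Gamma> :: "nat list set set"
  assumes "q \<ge> 2"
    and "finite \<Gamma>"
    and "\<forall>R\<in>\<Gamma>. R \<subseteq> cube q k"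
  shows "equiv (cube q n) (E_rel \<Gamma> q k n) \<and>
         (\<forall>a\<in>cube q n. \<exists>P. is_instance \<Gamma> q k n P \<and>
              Sat q n P = E_rel \<Gamma> q k n `` {a})"
proof
  have q: "q > 0" using assms(1) by simp
  show "equiv (cube q n) (E_rel \<Gamma> q k n)"
  proof (rule equivI)
    show "refl_on (cube q n) (E_rel \<Gamma> q k n)"
      unfolding refl_on_def using E_refl by (auto simp: E_rel_def)
    show "E_rel \<Gamma> q k n \<subseteq> cube q n \<times> cube q n"
      by (auto simp: E_rel_def)
    show "sym (E_rel \<Gamma> q k n)"
      unfolding sym_def using E_sym[OF _ q] by blast
    show "trans (E_rel \<Gamma> q k n)"
      unfolding trans_def using E_trans by blast
  qed
  show "\<forall>a\<in>cube q n. \<exists>P. is_instance \<Gamma> q k n P \<and> Sat q n P = E_rel \<Gamma> q k n `` {a}"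
  proof
    fix a assume a: "a \<in> cube q n"
    define P where "P = {con. is_constraint \<Gamma> q k n con \<and> sat_constr q a con}"
    have fc: "finite (cube r m)" for r m
    proof -
      have "cube r m \<subseteq> {xs. set xs \<subseteq> {..<r} \<and> length xs = m}"
        by (auto simp: cube_def)
      then show ?thesis using finite_lists_length_eq[of "{..<r}" m] finite_subset by blast
    qed
    have fs: "finite {sc :: nat list. length sc = k \<and> (\<forall>i\<in>set sc. i < n)}"
      using fc[of n k] by (simp add: cube_def)
    have "P \<subseteq> \<Gamma> \<times> {sc. length sc = k \<and> (\<forall>i\<in>set sc. i < n)} \<times> cube q n"
      by (auto simp: P_def is_constraint_def)
    then have "finite P" using assms(2) fs fc by (meson finite_SigmaI finite_subset)
    then have PI: "is_instance \<Gamma> q k n P" by (auto simp: is_instance_def P_def)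
    have aP: "a \<in> Sat q n P" using a by (auto simp: Sat_def P_def)
    have "Sat q n P = E_rel \<Gamma> q k n `` {a}"
    proof
      show "E_rel \<Gamma> q k n `` {a} \<subseteq> Sat q n P"
        using PI aP by (auto simp: E_rel_def)
      show "Sat q n P \<subseteq> E_rel \<Gamma> q k n `` {a}"
      proof
        fix b assume b: "b \<in> Sat q n P"
        have "b \<in> Sat q n I" if "is_instance \<Gamma> q k n I" "a \<in> Sat q n I" for I
        proof -
          have "I \<subseteq> P" using that by (auto simp: P_def is_instance_def Sat_def)
          then show ?thesis using b by (auto simp: Sat_def)
        qed
        then show "b \<in> E_rel \<Gamma> q k n `` {a}" using a b by (auto simp: E_rel_def Sat_def)
      qed
    qed
    then show "\<exists>P. is_instance \<Gamma> q k n P \<and> Sat q n P = E_rel \<Gamma> q k n `` {a}"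
      using PI by blast
  qed
qed

end
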